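(* In the setting of the errors-in-variables model with restricted inverted-Wishart prior described below, with $n\ge3$, $\nu=n-1$, positive-definite sample covariance $S$, and any proper prior density $p(\beta)$, the posterior density of $\beta$ (defined for $\nu_0>1$) converges, for each $\beta\neq0$, as $\nu_0\to0^+$ (for any fixed $-1<\rho_0<1$, $\kappa_0>0$) to $$p(\beta\mid y)=\frac{p(\beta)\,J(\beta,\nu,r,l)}{\int_{-\infty}^\infty p(\beta)\,J(\beta,\nu,r,l)\,d\beta},\qquad r=\frac{S_{12}}{(S_{11}S_{22})^{1/2}},\quad l=\Big(\frac{S_{22}}{S_{11}}\Big)^{1/2}.$$ Here the posterior for $\nu_0>1$ is $p(\beta)\,|\beta|^{\nu_0}|\Psi_0(\beta)+\nu S|^{-(\nu_0+\nu)/2}J\big(\beta,\nu_0+\nu,r(\Psi_0(\beta)+\nu S),l(\Psi_0(\beta)+\nu S)\big)$ normalized over $\beta$, and this expression is the one whose limit is taken. Moreover $J(\beta,\nu,r,l)=J(\beta/l,\nu,r,1)$, so the limit depends on the data only through $r$ and $l$, and the posterior density of $\tilde\beta=\beta/l$ under a proper prior density $q(\tilde\beta)$ on $\tilde\beta$ is $q(\tilde\beta)J(\tilde\beta,\nu,r,1)/\int q\,J(\cdot,\nu,r,1)$, which depends on the data only through $r$.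
   Context: Model: $n$ i.i.d. pairs $(y_{1i},y_{2i})$, bivariate normal with mean $(\mu_1,\alpha+\beta\mu_1)$ and covariance $\Sigma=\begin{pmatrix}\tau^2+\sigma_1^2&\beta\tau^2\\ \beta\tau^2&\beta^2\tau^2+\sigma_2^2\end{pmatrix}$, $\tau^2,\sigma_1^2,\sigma_2^2\ge0$. Prior: constant in $(\mu_1,\alpha)$; $p(\tau^2,\sigma_1^2,\sigma_2^2\mid\beta)=|\beta|p(\Sigma\mid\beta)$ with $p(\Sigma\mid\beta)\propto|\Sigma|^{-(\nu_0+3)/2}\exp[-\tfrac12\operatorname{tr}(\Psi_0(\beta)\Sigma^{-1})]$ restricted to $R_\beta$ and normalized, where $\Psi_0(\beta)=\nu_0\kappa_0^2\begin{pmatrix}1&\rho_0\beta\\ \rho_0\beta&\beta^2\end{pmatrix}$ and $R_\beta$ is the set of positive-definite symmetric $\Sigma$ with $\Sigma_{12}/\beta\ge0$, $\Sigma_{11}-\Sigma_{12}/\beta\ge0$, $\Sigma_{22}-\beta\Sigma_{12}\ge0$. For a positive-definite $\Psi$, $r(\Psi)=\Psi_{12}/(\Psi_{11}\Psi_{22})^{1/2}$, $l(\Psi)=(\Psi_{22}/\Psi_{11})^{1/2}$. Functions: $p_t(t;\nu)$ Student $t$ density; $P_F(x;\nu_1,\nu_2)$ $F$ distribution function; for $\nu>1$, $-1<r<1$, $\tilde\beta>0$: $t_-(\nu,r)=-\sqrt{\nu}\,r/\sqrt{1-r^2}$, $t_+(\tilde\beta,\nu,r)=\sqrt{\nu}(\tilde\beta-r)/\sqrt{1-r^2}$,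 $F(t,\tilde\beta,\nu,r)=\frac{\nu-1}{\nu+1}\frac{\nu+t^2}{[t_+-t_-]^2-[t-t_-]^2}$, $I(\tilde\beta,\nu,r)=\int_{t_-}^{t_+}p_t(t;\nu)P_F(F(t,\tilde\beta,\nu,r);\nu+1,\nu-1)\,dt$, and for $\beta\ne0$, $l>0$: $J(\beta,\nu,r,l)=I(|\beta|/l,\nu,r\,\mathrm{sign}\beta)+I(l/|\beta|,\nu,r\,\mathrm{sign}\beta)$. *)

theory Defs
  imports "HOL-Analysis.Analysis"
begin

definition student_t_density :: "real \<Rightarrow> real \<Rightarrow> real" where
  "student_t_density t nu =
     Gamma ((nu + 1) / 2) / (sqrt (nu * pi) * Gamma (nu / 2))
     * (1 + t\<^sup>2 / nu) powr (- (nu + 1) / 2)"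

definition F_density :: "real \<Rightarrow> real \<Rightarrow> real \<Rightarrow> real" where
  "F_density u n1 n2 =
     (if 0 < u then
        (n1 / n2) powr (n1 / 2) * u powr (n1 / 2 - 1)
        * (1 + n1 * u / n2) powr (- (n1 + n2) / 2) / Beta (n1 / 2) (n2 / 2)
      else 0)"

definition F_cdf :: "real \<Rightarrow> real \<Rightarrow> real \<Rightarrow> real" where
  "F_cdf x n1 n2 = (LINT u:{..x}|lborel. F_density u n1 n2)"

definition t_minus :: "real \<Rightarrow> real \<Rightarrow> real" where
  "t_minus nu r = - sqrt nu * r / sqrt (1 - r\<^sup>2)"

definition t_plus :: "real \<Rightarrow> real \<Rightarrow> real \<Rightarrow> real" where
  "t_plus bt nu r = sqrt nu * (bt - r) / sqrt (1 - r\<^sup>2)"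

definition Ffun :: "real \<Rightarrow> real \<Rightarrow> real \<Rightarrow> real \<Rightarrow> real" where
  "Ffun t bt nu r =
     (nu - 1) / (nu + 1) * (nu + t\<^sup>2)
     / ((t_plus bt nu r - t_minus nu r)\<^sup>2 - (t - t_minus nu r)\<^sup>2)"

definition Ifun :: "real \<Rightarrow> real \<Rightarrow> real \<Rightarrow> real" where
  "Ifun bt nu r =
     (LINT t:{t_minus nu r .. t_plus bt nu r}|lborel.
        student_t_density t nu * F_cdf (Ffun t bt nu r) (nu + 1) (nu - 1))"

definition Jfun :: "real \<Rightarrow> real \<Rightarrow> real \<Rightarrow> real \<Rightarrow> real" where
  "Jfun b nu r l = Ifun (\<bar>b\<bar> / l) nu (r * sgn b) + Ifun (l / \<bar>b\<bar>) nu (r * sgn b)"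

definition pos_def2 :: "real^2^2 \<Rightarrow> bool" where
  "pos_def2 A \<longleftrightarrow> transpose A = A \<and> (\<forall>x::real^2. x \<noteq> 0 \<longrightarrow> 0 < x \<bullet> (A *v x))"

definition r_of :: "real^2^2 \<Rightarrow> real" where
  "r_of A = A$1$2 / sqrt (A$1$1 * A$2$2)"

definition l_of :: "real^2^2 \<Rightarrow> real" where
  "l_of A = sqrt (A$2$2 / A$1$1)"

definition Psi0 :: "real \<Rightarrow> real \<Rightarrow> real \<Rightarrow> real \<Rightarrow> real^2^2" where
  "Psi0 nu0 kappa0 rho0 b =
     (nu0 * kappa0\<^sup>2) *\<^sub>R vector [vector [1, rho0 * b], vector [rho0 * b, b\<^sup>2]]"

definition proper_density :: "(real \<Rightarrow> real) \<Rightarrow> bool" where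
  "proper_density p \<longleftrightarrow> p \<in> borel_measurable lborel \<and> (\<forall>x. 0 \<le> p x)
     \<and> integrable lborel p \<and> integral\<^sup>L lborel p = 1"

definition post_unnorm ::
  "(real \<Rightarrow> real) \<Rightarrow> nat \<Rightarrow> real \<Rightarrow> real \<Rightarrow> real \<Rightarrow> real^2^2 \<Rightarrow> real \<Rightarrow> real" where
  "post_unnorm p n nu0 kappa0 rho0 S b =
     (let nu = real n - 1; M = Psi0 nu0 kappa0 rho0 b + nu *\<^sub>R S in
      p b * \<bar>b\<bar> powr nu0 * det M powr (- (nu0 + nu) / 2)
      * Jfun b (nu0 + nu) (r_of M) (l_of M))"

definition posterior ::
  "(real \<Rightarrow> real) \<Rightarrow> nat \<Rightarrow> real \<Rightarrow> real \<Rightarrow> real \<Rightarrow> real^2^2 \<Rightarrow> real \<Rightarrow> real" where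
  "posterior p n nu0 kappa0 rho0 S b =
     post_unnorm p n nu0 kappa0 rho0 S b
     / (LINT b'|lborel. post_unnorm p n nu0 kappa0 rho0 S b')"

end

theory Submission
  imports Defs
begin

lemma integrable_FTC_atLeast:
  fixes f F :: "real \<Rightarrow> real"
  assumes m: "f \<in> borel_measurable borel"
    and d: "\<And>x. a \<le> x \<Longrightarrow> DERIV F x :> f x"
    and nn: "\<And>x. a \<le> x \<Longrightarrow> 0 \<le> f x"
    and lim: "(F \<longlongrightarrow> T) at_top"
  shows "integrable lborel (\<lambda>x. indicator {a..} x * f x)"
proof -
  have e: "(\<integral>\<^sup>+x. ennreal (f x) * indicator {a ..} x \<partial>lborel) = T - F a"
    by (rule nn_integral_FTC_atLeast[OF m d nn lim])
  have "(\<integral>\<^sup>+x. ennreal (norm (indicator {a..} x * f x)) \<partial>lborel) = (\<integral>\<^sup>+x. ennreal (f x) * indicator {a ..} x \<partial>lborel)"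
    by (intro nn_integral_cong) (auto simp: indicator_def nn)
  then show ?thesis using e m unfolding integrable_iff_bounded by simp
qed

lemma integrable_inv_1_sq: "integrable lborel (\<lambda>x::real. 1 / (1 + x\<^sup>2))"
proof -
  have m: "(\<lambda>x::real. 1 / (1 + x\<^sup>2)) \<in> borel_measurable borel" by measurable
  have h0: "integrable lborel (\<lambda>x::real. indicator {0..} x * (1 / (1 + x\<^sup>2)))"
  proof (rule integrable_FTC_atLeast[OF m, where F=arctan and T="pi/2"])
    show "\<And>x. 0 \<le> x \<Longrightarrow> DERIV arctan x :> 1 / (1 + x\<^sup>2)"
      by (auto intro!: derivative_eq_intros simp: field_simps power2_eq_square add_nonneg_eq_0_iff)
    show "(arctan \<longlongrightarrow> pi/2) at_top" by (rule tendsto_arctan_at_top)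
  qed (auto simp: add_pos_nonneg)
  have h1: "integrable lborel (\<lambda>x::real. indicator {0..} (0 + (-1) * x) * (1 / (1 + (0 + (-1) * x)\<^sup>2)))"
    by (rule lborel_integrable_real_affine[OF h0]) simp
  have "integrable lborel (\<lambda>x::real. indicator {0..} x * (1 / (1 + x\<^sup>2)) + indicator {0..} (0 + (-1) * x) * (1 / (1 + (0 + (-1) * x)\<^sup>2)))"
    using h0 h1 by (rule Bochner_Integration.integrable_add)
  then show ?thesis
    by (rule Bochner_Integration.integrable_bound) (auto simp: m indicator_def)
qed

lemma integrable_powr_atLeast1:
  fixes e :: real assumes "e < -1"
  shows "integrable lborel (\<lambda>x. indicator {1..} x * x powr e)"
proof (rule integrable_FTC_atLeast[where F="\<lambda>x. x powr (e+1) / (e+1)" and T=0])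
  show "(\<lambda>x::real. x powr e) \<in> borel_measurable borel" by measurable
  show "\<And>x. 1 \<le> x \<Longrightarrow> ((\<lambda>x. x powr (e + 1) / (e + 1)) has_real_derivative x powr e) (at x)"
  proof -
    fix x :: real assume x: "1 \<le> x"
    have ne: "e + 1 \<noteq> 0" using assms by simp
    show "((\<lambda>x. x powr (e + 1) / (e + 1)) has_real_derivative x powr e) (at x)"
      using x ne by (auto intro!: derivative_eq_intros)
  qed
  show "((\<lambda>x. x powr (e + 1) / (e + 1)) \<longlongrightarrow> 0) at_top"
    using assms by real_asymp
qed auto

lemma tendsto_Gamma_real:
  fixes f :: "'a \<Rightarrow> real"
  assumes "(f \<longlongrightarrow> a) F" "a > 0"
  shows "((\<lambda>x. Gamma (f x)) \<longlongrightarrow> Gamma a) F"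
proof -
  have "a \<notin> \<int>\<^sub>\<le>\<^sub>0" using assms(2) by (auto dest: nonpos_Ints_nonpos)
  then have "isCont (\<lambda>x. Gamma x) a" by (intro isCont_Gamma continuous_ident)
  then show ?thesis using assms(1) by (rule isCont_tendsto_compose)
qed

lemma Beta_pos: "a > 0 \<Longrightarrow> b > 0 \<Longrightarrow> Beta a b > (0::real)"
  by (simp add: Beta_def)

lemma tendsto_Beta_real:
  fixes f g :: "'a \<Rightarrow> real"
  assumes "(f \<longlongrightarrow> a) F" "(g \<longlongrightarrow> b) F" "a > 0" "b > 0"
  shows "((\<lambda>x. Beta (f x) (g x)) \<longlongrightarrow> Beta a b) F"
proof -
  have G: "Gamma (a+b) > 0" using assms by (intro Gamma_real_pos) simp
  have 1: "((\<lambda>x. Gamma (f x)) \<longlongrightarrow> Gamma a) F" using assms by (intro tendsto_Gamma_real)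
  have 2: "((\<lambda>x. Gamma (g x)) \<longlongrightarrow> Gamma b) F" using assms by (intro tendsto_Gamma_real)
  have 3: "((\<lambda>x. Gamma (f x + g x)) \<longlongrightarrow> Gamma (a+b)) F"
    by (rule tendsto_Gamma_real[OF tendsto_add[OF assms(1,2)]]) (use assms in simp)
  have G': "Gamma (a+b) \<noteq> 0" using G by linarith
  show ?thesis unfolding Beta_def
    by (rule tendsto_divide[OF tendsto_mult[OF 1 2] 3 G'])
qed

definition Fcoef :: "real \<Rightarrow> real \<Rightarrow> real" where
  "Fcoef n1 n2 = (n1 / n2) powr (n1 / 2) / Beta (n1 / 2) (n2 / 2)"

definition Fbnd :: "real \<Rightarrow> real \<Rightarrow> real" where
  "Fbnd n1 n2 = Fcoef n1 n2 * (1 + (n1 / n2) powr (- (n1 + n2) / 2))"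

definition gF :: "real \<Rightarrow> real" where
  "gF u = indicator {0<..1} u + indicator {1..} u * u powr (-3/2)"

lemma Fcoef_nonneg: "n1 > 0 \<Longrightarrow> n2 > 0 \<Longrightarrow> 0 \<le> Fcoef n1 n2"
  unfolding Fcoef_def using Beta_pos[of "n1/2" "n2/2"] by simp

lemma Fbnd_nonneg: "n1 > 0 \<Longrightarrow> n2 > 0 \<Longrightarrow> 0 \<le> Fbnd n1 n2"
  unfolding Fbnd_def using Fcoef_nonneg[of n1 n2] by (simp add: add_nonneg_nonneg)

lemma gF_nonneg: "0 \<le> gF u"
  by (simp add: gF_def)

lemma gF_measurable[measurable]: "gF \<in> borel_measurable borel"
  unfolding gF_def by measurable

lemma gF_integrable: "integrable lborel gF"
proof -
  have "integrable lborel (\<lambda>u::real. indicator {0<..1} u + indicator {1..} u * u powr (-3/2))"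
    by (intro Bochner_Integration.integrable_add integrable_powr_atLeast1 integrable_real_indicator) auto
  then show ?thesis by (simp add: gF_def[abs_def])
qed

lemma F_density_alt: "0 < u \<Longrightarrow> F_density u n1 n2 =
   Fcoef n1 n2 * (u powr (n1/2 - 1) * (1 + n1 * u / n2) powr (- (n1 + n2) / 2))"
  by (simp add: F_density_def Fcoef_def)

lemma F_density_nonneg: "n1 > 0 \<Longrightarrow> n2 > 0 \<Longrightarrow> 0 \<le> F_density u n1 n2"
proof -
  assume "n1 > 0" "n2 > 0"
  then have "0 < Beta (n1/2) (n2/2)" by (intro Beta_pos) auto
  then show ?thesis unfolding F_density_def
    by (simp add: divide_nonneg_pos)
qed

lemma F_density_measurable[measurable]: "(\<lambda>u. F_density u n1 n2) \<in> borel_measurable borel"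
  unfolding F_density_def by measurable

lemma F_density_le:
  assumes n1: "n1 \<ge> 2" and n2: "n2 \<ge> 1"
  shows "F_density u n1 n2 \<le> Fbnd n1 n2 * gF u"
proof (cases "0 < u")
  case False
  then show ?thesis using Fbnd_nonneg[of n1 n2] gF_nonneg[of u] n1 n2
    by (simp add: F_density_def)
next
  case u: True
  define c where "c = Fcoef n1 n2"
  define e where "e = - (n1 + n2) / 2"
  have c0: "0 \<le> c" using Fcoef_nonneg[of n1 n2] n1 n2 by (simp add: c_def)
  have Fe: "F_density u n1 n2 = c * (u powr (n1/2 - 1) * (1 + n1 * u / n2) powr e)"
    using u by (simp add: F_density_alt c_def e_def)
  have e0: "e \<le> 0" using n1 n2 by (simp add: e_def)
  have pos: "0 < n1 * u / n2" using u n1 n2 by simp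
  show ?thesis
  proof (cases "u \<le> 1")
    case True
    have A: "u powr (n1/2 - 1) \<le> 1" using True u n1 by (intro powr_le1) auto
    have B: "(1 + n1 * u / n2) powr e \<le> 1 powr e"
      by (rule powr_mono2'[OF e0]) (use pos in auto)
    have A0: "0 \<le> u powr (n1/2 - 1)" by simp
    have B0: "0 \<le> (1 + n1 * u / n2) powr e" by simp
    have "u powr (n1/2 - 1) * (1 + n1 * u / n2) powr e \<le> 1 * 1"
      using A B A0 B0 by (intro mult_mono) auto
    then have "F_density u n1 n2 \<le> c" using Fe c0 by (simp add: mult_left_le)
    also have "c \<le> Fbnd n1 n2"
      unfolding Fbnd_def c_def[symmetric] using c0 by (simp add: mult_le_cancel_left1)
    also have "Fbnd n1 n2 \<le> Fbnd n1 n2 * gF u"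
    proof -
      have "1 \<le> gF u" using True u by (simp add: gF_def)
      then show ?thesis using Fbnd_nonneg[of n1 n2] n1 n2 by (simp add: mult_le_cancel_left1)
    qed
    finally show ?thesis .
  next
    case False
    then have u1: "1 < u" by simp
    have B: "(1 + n1 * u / n2) powr e \<le> (n1 * u / n2) powr e"
      by (rule powr_mono2'[OF e0 pos]) simp
    also have "(n1 * u / n2) powr e = (n1 / n2) powr e * u powr e"
      using u n1 n2 by (simp add: powr_mult[symmetric])
    finally have B': "(1 + n1 * u / n2) powr e \<le> (n1 / n2) powr e * u powr e" .
    have "u powr (n1/2 - 1) * (1 + n1 * u / n2) powr e \<le> u powr (n1/2 - 1) * ((n1 / n2) powr e * u powr e)"
      by (rule mult_left_mono[OF B']) simp
    also have "\<dots> = (n1 / n2) powr e * u powr (n1/2 - 1 + e)"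
      by (simp add: powr_add)
    also have "u powr (n1/2 - 1 + e) \<le> u powr (-3/2)"
    proof (rule powr_mono)
      show "n1/2 - 1 + e \<le> -3/2" unfolding e_def using n2 by (simp add: field_simps)
    qed (use u1 in auto)
    then have "(n1 / n2) powr e * u powr (n1/2 - 1 + e) \<le> (n1 / n2) powr e * u powr (-3/2)"
      by (intro mult_left_mono) auto
    finally have X: "u powr (n1/2 - 1) * (1 + n1 * u / n2) powr e \<le> (n1 / n2) powr e * u powr (-3/2)" .
    have "F_density u n1 n2 \<le> c * ((n1 / n2) powr e * u powr (-3/2))"
      unfolding Fe by (rule mult_left_mono[OF X c0])
    also have "\<dots> \<le> Fbnd n1 n2 * u powr (-3/2)"
    proof -
      have w0: "0 \<le> u powr (-3/2)" by simp
      have "(n1/n2) powr e * u powr (-3/2) \<le> (1 + (n1/n2) powr e) * u powr (-3/2)"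
        by (rule mult_right_mono[OF _ w0]) simp
      then have "c * ((n1/n2) powr e * u powr (-3/2)) \<le> c * ((1 + (n1/n2) powr e) * u powr (-3/2))"
        by (rule mult_left_mono[OF _ c0])
      then show ?thesis unfolding Fbnd_def c_def[symmetric] e_def[symmetric] by (simp add: mult.assoc)
    qed
    also have "\<dots> = Fbnd n1 n2 * gF u" using u1 by (simp add: gF_def)
    finally show ?thesis .
  qed
qed

definition GF :: real where "GF = integral\<^sup>L lborel gF"

lemma F_cdf_integrand_integrable:
  assumes n1: "n1 \<ge> 2" and n2: "n2 \<ge> 1"
  shows "integrable lborel (\<lambda>u. indicator {..x} u *\<^sub>R F_density u n1 n2)"
proof (rule Bochner_Integration.integrable_bound)
  show "integrable lborel (\<lambda>u. Fbnd n1 n2 * gF u)" using gF_integrable by simp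
  show "(\<lambda>u. indicator {..x} u *\<^sub>R F_density u n1 n2) \<in> borel_measurable lborel" by measurable
  show "AE u in lborel. norm (indicator {..x} u *\<^sub>R F_density u n1 n2) \<le> norm (Fbnd n1 n2 * gF u)"
    using F_density_le[OF n1 n2] F_density_nonneg[of n1 n2] n1 n2 Fbnd_nonneg[of n1 n2] gF_nonneg
    by (intro AE_I2) (auto simp: indicator_def)
qed

lemma F_cdf_bounds:
  assumes n1: "n1 \<ge> 2" and n2: "n2 \<ge> 1"
  shows "0 \<le> F_cdf x n1 n2" "F_cdf x n1 n2 \<le> Fbnd n1 n2 * GF"
proof -
  show "0 \<le> F_cdf x n1 n2"
    unfolding F_cdf_def set_lebesgue_integral_def
    using F_density_nonneg[of n1 n2] n1 n2
    by (intro integral_nonneg_AE AE_I2) (auto simp: indicator_def)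
  have "F_cdf x n1 n2 \<le> integral\<^sup>L lborel (\<lambda>u. Fbnd n1 n2 * gF u)"
    unfolding F_cdf_def set_lebesgue_integral_def
    using F_density_le[OF n1 n2] F_density_nonneg[of n1 n2] n1 n2 Fbnd_nonneg[of n1 n2] gF_nonneg
    by (intro integral_mono F_cdf_integrand_integrable[OF n1 n2])
       (auto simp: gF_integrable indicator_def)
  then show "F_cdf x n1 n2 \<le> Fbnd n1 n2 * GF" by (simp add: GF_def)
qed

lemma tendsto_Fcoef:
  fixes f g :: "'a \<Rightarrow> real"
  assumes "(f \<longlongrightarrow> a) F" "(g \<longlongrightarrow> b) F" "a > 0" "b > 0"
  shows "((\<lambda>x. Fcoef (f x) (g x)) \<longlongrightarrow> Fcoef a b) F"
  unfolding Fcoef_def using assms Beta_pos[of "a/2" "b/2"]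
  by (intro tendsto_divide tendsto_powr tendsto_Beta_real tendsto_intros) auto

lemma tendsto_Fbnd:
  fixes f g :: "'a \<Rightarrow> real"
  assumes "(f \<longlongrightarrow> a) F" "(g \<longlongrightarrow> b) F" "a > 0" "b > 0"
  shows "((\<lambda>x. Fbnd (f x) (g x)) \<longlongrightarrow> Fbnd a b) F"
  unfolding Fbnd_def using assms
  by (intro tendsto_mult tendsto_Fcoef tendsto_add tendsto_const tendsto_powr tendsto_intros) auto

lemma F_cdf_cont_seq:
  assumes x: "X \<longlonglongrightarrow> x" and a: "A \<longlonglongrightarrow> n1" and b: "B \<longlonglongrightarrow> n2"
    and A2: "\<And>i. A i \<ge> 2" and B1: "\<And>i. B i \<ge> 1" and n1: "n1 \<ge> 2" and n2: "n2 \<ge> 1"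
  shows "(\<lambda>i. F_cdf (X i) (A i) (B i)) \<longlonglongrightarrow> F_cdf x n1 n2"
proof -
  have "convergent (\<lambda>i. Fbnd (A i) (B i))"
    by (rule convergentI[OF tendsto_Fbnd[OF a b]]) (use n1 n2 in auto)
  then have "Bseq (\<lambda>i. Fbnd (A i) (B i))" by (rule convergent_imp_Bseq)
  then obtain K where "0 < K" and K': "\<forall>i. norm (Fbnd (A i) (B i)) \<le> K"
    unfolding Bseq_def by blast
  then have K: "\<And>i. norm (Fbnd (A i) (B i)) \<le> K" by blast
  have "(\<lambda>i. integral\<^sup>L lborel (\<lambda>u. indicator {..X i} u *\<^sub>R F_density u (A i) (B i)))
        \<longlonglongrightarrow> integral\<^sup>L lborel (\<lambda>u. indicator {..x} u *\<^sub>R F_density u n1 n2)"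
  proof (rule integral_dominated_convergence[where w="\<lambda>u. K * gF u"])
    show "(\<lambda>u. indicator {..x} u *\<^sub>R F_density u n1 n2) \<in> borel_measurable lborel" by measurable
    show "\<And>i. (\<lambda>u. indicator {..X i} u *\<^sub>R F_density u (A i) (B i)) \<in> borel_measurable lborel" by measurable
    show "integrable lborel (\<lambda>u. K * gF u)" using gF_integrable by simp
    show "AE u in lborel. (\<lambda>i. indicator {..X i} u *\<^sub>R F_density u (A i) (B i)) \<longlonglongrightarrow>
             indicator {..x} u *\<^sub>R F_density u n1 n2"
    proof (rule eventually_mono[OF AE_lborel_singleton[of x]])
      fix u :: real assume ux: "u \<noteq> x"
      have ind: "(\<lambda>i. indicator {..X i} u :: real) \<longlonglongrightarrow> indicator {..x} u"
      proof (cases "u < x")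
        case True
        then have "eventually (\<lambda>i. u < X i) sequentially"
          using x by (simp add: order_tendstoD)
        then have "eventually (\<lambda>i. indicator {..X i} u = (indicator {..x} u :: real)) sequentially"
          by eventually_elim (use True in \<open>auto simp: indicator_def\<close>)
        then show ?thesis by (rule tendsto_eventually)
      next
        case False
        then have "x < u" using ux by simp
        then have "eventually (\<lambda>i. X i < u) sequentially"
          using x by (simp add: order_tendstoD)
        then have "eventually (\<lambda>i. indicator {..X i} u = (indicator {..x} u :: real)) sequentially"
          by eventually_elim (use \<open>x < u\<close> in \<open>auto simp: indicator_def\<close>)
        then show ?thesis by (rule tendsto_eventually)
      qed
      have dens: "(\<lambda>i. F_density u (A i) (B i)) \<longlonglongrightarrow> F_density u n1 n2"
      proof (cases "0 < u")
        case True
        have "(\<lambda>i. Fcoef (A i) (B i) * (u powr (A i/2 - 1) * (1 + A i * u / B i) powr (- (A i + B i) / 2)))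
              \<longlonglongrightarrow> Fcoef n1 n2 * (u powr (n1/2 - 1) * (1 + n1 * u / n2) powr (- (n1 + n2) / 2))"
        proof -
          have "0 < 1 + n1 * u / n2" using True n1 n2 by (simp add: add_pos_pos)
          then show ?thesis
            by (intro tendsto_mult tendsto_Fcoef tendsto_powr tendsto_intros)
               (use True n1 n2 a b in auto)
        qed
        then show ?thesis using True by (simp add: F_density_alt)
      next
        case False
        then show ?thesis by (simp add: F_density_def)
      qed
      show "(\<lambda>i. indicator {..X i} u *\<^sub>R F_density u (A i) (B i)) \<longlonglongrightarrow>
             indicator {..x} u *\<^sub>R F_density u n1 n2"
        using ind dens by (simp add: tendsto_mult)
    qed
    show "\<And>i. AE u in lborel. norm (indicator {..X i} u *\<^sub>R F_density u (A i) (B i)) \<le> K * gF u"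
    proof (intro AE_I2)
      fix i u
      have "norm (indicator {..X i} u *\<^sub>R F_density u (A i) (B i)) \<le> F_density u (A i) (B i)"
        using F_density_nonneg[of "A i" "B i" u] A2[of i] B1[of i] by (auto simp: indicator_def)
      also have "\<dots> \<le> Fbnd (A i) (B i) * gF u" by (rule F_density_le[OF A2 B1])
      also have "\<dots> \<le> K * gF u"
        using K[of i] gF_nonneg[of u] by (intro mult_right_mono) auto
      finally show "norm (indicator {..X i} u *\<^sub>R F_density u (A i) (B i)) \<le> K * gF u" .
    qed
  qed
  then show ?thesis unfolding F_cdf_def set_lebesgue_integral_def .
qed

lemma F_cdf_measurable[measurable]:
  assumes "n1 \<ge> 2" "n2 \<ge> 1"
  shows "(\<lambda>x. F_cdf x n1 n2) \<in> borel_measurable borel"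
proof -
  have "continuous_on UNIV (\<lambda>x. F_cdf x n1 n2)"
    by (rule continuous_on_sequentiallyI) (use assms in \<open>auto intro!: F_cdf_cont_seq\<close>)
  then show ?thesis by (rule borel_measurable_continuous_onI)
qed

lemma integral_pos_interval:
  fixes f :: "real \<Rightarrow> real"
  assumes int: "integrable lborel f" and nn: "\<And>x. 0 \<le> f x"
    and pos: "\<And>x. a < x \<Longrightarrow> x < b \<Longrightarrow> 0 < f x" and ab: "a < b"
  shows "0 < integral\<^sup>L lborel f"
proof (rule ccontr)
  assume "\<not> 0 < integral\<^sup>L lborel f"
  moreover have "0 \<le> integral\<^sup>L lborel f" using nn by (intro integral_nonneg_AE AE_I2) auto
  ultimately have "integral\<^sup>L lborel f = 0" by simp
  then have "AE x in lborel. f x = 0"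
    using integral_nonneg_eq_0_iff_AE[OF int] nn by auto
  then obtain N where N: "{x \<in> space lborel. \<not> f x = 0} \<subseteq> N" "emeasure lborel N = 0" "N \<in> sets lborel"
    by (rule AE_E)
  have "{a<..<b} \<subseteq> N" using N(1) pos by force
  then have "emeasure lborel {a<..<b} \<le> emeasure lborel N" by (intro emeasure_mono N(3))
  then show False using N(2) ab by simp
qed

lemma F_cdf_pos:
  assumes n1: "n1 \<ge> 2" and n2: "n2 \<ge> 1" and x: "x > 0"
  shows "0 < F_cdf x n1 n2"
  unfolding F_cdf_def set_lebesgue_integral_def
proof (rule integral_pos_interval[OF F_cdf_integrand_integrable[OF n1 n2] _ _ x])
  show "\<And>u. 0 \<le> indicator {..x} u *\<^sub>R F_density u n1 n2"
    using F_density_nonneg[of n1 n2] n1 n2 by (auto simp: indicator_def)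
  show "\<And>u. 0 < u \<Longrightarrow> u < x \<Longrightarrow> 0 < indicator {..x} u *\<^sub>R F_density u n1 n2"
  proof -
    fix u assume u: "0 < u" "u < x"
    have "0 < Beta (n1/2) (n2/2)" using n1 n2 by (intro Beta_pos) auto
    moreover have "0 < 1 + n1 * u / n2" using u n1 n2 by (simp add: add_pos_pos)
    ultimately show "0 < indicator {..x} u *\<^sub>R F_density u n1 n2"
      using u n1 n2 by (simp add: F_density_def indicator_def)
  qed
qed

definition Scoef :: "real \<Rightarrow> real" where
  "Scoef nu = Gamma ((nu + 1) / 2) / (sqrt (nu * pi) * Gamma (nu / 2))"

lemma st_alt: "student_t_density t nu = Scoef nu * (1 + t\<^sup>2 / nu) powr (- (nu + 1) / 2)"
  by (simp add: student_t_density_def Scoef_def)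

lemma Scoef_pos: "nu > 0 \<Longrightarrow> 0 < Scoef nu"
proof -
  assume nu: "nu > 0"
  have "Gamma ((nu + 1) / 2) > 0" using nu by (intro Gamma_real_pos) simp
  moreover have "Gamma (nu / 2) > 0" using nu by (intro Gamma_real_pos) simp
  moreover have "sqrt (nu * pi) > 0" using nu by simp
  ultimately show ?thesis unfolding Scoef_def by simp
qed

lemma st_pos: "nu > 0 \<Longrightarrow> 0 < student_t_density t nu"
proof -
  assume nu: "nu > 0"
  have "0 < 1 + t\<^sup>2 / nu" using nu by (simp add: add_pos_nonneg)
  then show ?thesis using Scoef_pos[OF nu] by (simp add: st_alt)
qed

lemma st_nonneg: "nu > 0 \<Longrightarrow> 0 \<le> student_t_density t nu"
  using st_pos[of nu t] by simp

lemma st_le_Cauchy: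
  assumes nu1: "nu \<ge> 1" and nuN: "nu \<le> N"
  shows "student_t_density t nu \<le> Scoef nu * (1 / (1 + t\<^sup>2 / N))"
proof -
  define b where "b = 1 + t\<^sup>2 / nu"
  have b1: "1 \<le> b" using nu1 by (simp add: b_def)
  have "b powr (- (nu + 1) / 2) \<le> b powr (-1)"
    by (rule powr_mono) (use nu1 b1 in auto)
  also have "b powr (-1) = 1 / b" using b1 by (simp add: powr_minus divide_inverse)
  also have "1 / b \<le> 1 / (1 + t\<^sup>2 / N)"
  proof (rule divide_left_mono)
    have "t\<^sup>2 / N \<le> t\<^sup>2 / nu" using nu1 nuN by (intro divide_left_mono) auto
    then show "1 + t\<^sup>2 / N \<le> b" by (simp add: b_def)
    show "0 < b * (1 + t\<^sup>2 / N)" using b1 nu1 nuN by (intro mult_pos_pos) (auto simp: add_pos_nonneg)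
  qed simp
  finally have "b powr (- (nu + 1) / 2) \<le> 1 / (1 + t\<^sup>2 / N)" .
  then show ?thesis unfolding st_alt b_def[symmetric]
    using Scoef_pos[of nu] nu1 by (intro mult_left_mono) auto
qed

lemma st_measurable[measurable]: "(\<lambda>t. student_t_density t nu) \<in> borel_measurable borel"
  unfolding student_t_density_def by measurable

lemma tendsto_Scoef:
  fixes f :: "'a \<Rightarrow> real"
  assumes f: "(f \<longlongrightarrow> nu) F" and nu: "nu > 0"
  shows "((\<lambda>x. Scoef (f x)) \<longlongrightarrow> Scoef nu) F"
proof -
  have 1: "((\<lambda>x. Gamma ((f x + 1) / 2)) \<longlongrightarrow> Gamma ((nu + 1) / 2)) F"
    by (rule tendsto_Gamma_real) (use f nu in \<open>auto intro!: tendsto_intros\<close>)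
  have 2: "((\<lambda>x. Gamma (f x / 2)) \<longlongrightarrow> Gamma (nu / 2)) F"
    by (rule tendsto_Gamma_real) (use f nu in \<open>auto intro!: tendsto_intros\<close>)
  have 3: "((\<lambda>x. sqrt (f x * pi)) \<longlongrightarrow> sqrt (nu * pi)) F"
    using f by (intro tendsto_intros)
  have G: "Gamma (nu / 2) > 0" using nu by (intro Gamma_real_pos) simp
  have G': "Gamma (nu / 2) \<noteq> 0" using G by linarith
  have ne: "sqrt (nu * pi) * Gamma (nu / 2) \<noteq> 0"
    using nu G' by simp
  show ?thesis unfolding Scoef_def
    by (rule tendsto_divide[OF 1 tendsto_mult[OF 3 2] ne])
qed

lemma tendsto_st:
  fixes f :: "'a \<Rightarrow> real"
  assumes f: "(f \<longlongrightarrow> nu) F" and nu: "nu > 0"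
  shows "((\<lambda>x. student_t_density t (f x)) \<longlongrightarrow> student_t_density t nu) F"
proof -
  have ne: "1 + t\<^sup>2 / nu \<noteq> 0" using nu by (smt (verit) divide_nonneg_pos zero_le_power2)
  have "((\<lambda>x. Scoef (f x) * (1 + t\<^sup>2 / f x) powr (- (f x + 1) / 2)) \<longlongrightarrow>
         Scoef nu * (1 + t\<^sup>2 / nu) powr (- (nu + 1) / 2)) F"
    using nu by (intro tendsto_mult tendsto_Scoef[OF f nu] tendsto_powr[OF _ _ ne] tendsto_intros f) auto
  then show ?thesis by (simp add: st_alt)
qed

definition Cauchy_bound :: "real \<Rightarrow> real \<Rightarrow> real" where
  "Cauchy_bound N t = 1 / (1 + t\<^sup>2 / N)"

lemma Cauchy_bound_integrable:
  assumes N: "N > 0" shows "integrable lborel (Cauchy_bound N)"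
proof -
  have "integrable lborel (\<lambda>x. (\<lambda>x::real. 1 / (1 + x\<^sup>2)) (0 + (1 / sqrt N) * x))"
    by (rule lborel_integrable_real_affine[OF integrable_inv_1_sq]) (use N in simp)
  moreover have "\<And>x. (\<lambda>x::real. 1 / (1 + x\<^sup>2)) (0 + (1 / sqrt N) * x) = Cauchy_bound N x"
    using N by (simp add: Cauchy_bound_def power_divide)
  ultimately show ?thesis by (simp add: fun_eq_iff)
qed

lemma Cauchy_bound_nonneg: "N > 0 \<Longrightarrow> 0 \<le> Cauchy_bound N t"
  by (simp add: Cauchy_bound_def add_nonneg_nonneg)

lemma Cauchy_bound_measurable[measurable]: "Cauchy_bound N \<in> borel_measurable borel"
  unfolding Cauchy_bound_def[abs_def] by measurable

definition Ig :: "real \<Rightarrow> real \<Rightarrow> real \<Rightarrow> real \<Rightarrow> real" where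
  "Ig bt nu r t = indicator {t_minus nu r .. t_plus bt nu r} t *
     (student_t_density t nu * F_cdf (Ffun t bt nu r) (nu + 1) (nu - 1))"

lemma Ifun_Ig: "Ifun bt nu r = integral\<^sup>L lborel (Ig bt nu r)"
  unfolding Ifun_def set_lebesgue_integral_def Ig_def by simp

lemma Ffun_measurable[measurable]: "(\<lambda>t. Ffun t bt nu r) \<in> borel_measurable borel"
  unfolding Ffun_def by measurable

lemma Ig_measurable:
  assumes nu: "nu \<ge> 2" shows "Ig bt nu r \<in> borel_measurable borel"
proof -
  have Fm: "(\<lambda>x. F_cdf x (nu + 1) (nu - 1)) \<in> borel_measurable borel"
    by (rule F_cdf_measurable) (use nu in auto)
  have [measurable]: "(\<lambda>t. F_cdf (Ffun t bt nu r) (nu + 1) (nu - 1)) \<in> borel_measurable borel"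
    using measurable_compose[OF Ffun_measurable Fm] by (simp add: comp_def)
  show ?thesis unfolding Ig_def[abs_def] by measurable
qed

lemma Ig_nonneg: "nu \<ge> 2 \<Longrightarrow> 0 \<le> Ig bt nu r t"
  unfolding Ig_def using st_nonneg[of nu t] F_cdf_bounds(1)[of "nu+1" "nu-1"]
  by (simp add: indicator_def)

lemma Ig_le:
  assumes nu: "nu \<ge> 2" and N: "nu \<le> N"
  shows "Ig bt nu r t \<le> Scoef nu * Fbnd (nu + 1) (nu - 1) * GF * Cauchy_bound N t"
proof -
  have a: "student_t_density t nu \<le> Scoef nu * Cauchy_bound N t"
    using st_le_Cauchy[of nu N t] nu N by (simp add: Cauchy_bound_def)
  have b: "F_cdf (Ffun t bt nu r) (nu + 1) (nu - 1) \<le> Fbnd (nu + 1) (nu - 1) * GF"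
    by (rule F_cdf_bounds(2)) (use nu in auto)
  have "student_t_density t nu * F_cdf (Ffun t bt nu r) (nu + 1) (nu - 1)
        \<le> (Scoef nu * Cauchy_bound N t) * (Fbnd (nu + 1) (nu - 1) * GF)"
    by (rule mult_mono[OF a b]) (use nu N st_nonneg[of nu t] F_cdf_bounds(1)[of "nu+1" "nu-1"] Scoef_pos[of nu] Cauchy_bound_nonneg[of N t] in auto)
  moreover have "0 \<le> student_t_density t nu * F_cdf (Ffun t bt nu r) (nu + 1) (nu - 1)"
    using st_nonneg[of nu t] F_cdf_bounds(1)[of "nu+1" "nu-1"] nu by simp
  ultimately show ?thesis unfolding Ig_def by (auto simp: indicator_def algebra_simps)
qed

lemma Ig_integrable:
  assumes nu: "nu \<ge> 2" shows "integrable lborel (Ig bt nu r)"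
proof (rule Bochner_Integration.integrable_bound)
  show "integrable lborel (\<lambda>t. Scoef nu * Fbnd (nu + 1) (nu - 1) * GF * Cauchy_bound nu t)"
    using Cauchy_bound_integrable[of nu] nu by simp
  show "Ig bt nu r \<in> borel_measurable lborel" using Ig_measurable[OF nu] by simp
  show "AE x in lborel. norm (Ig bt nu r x) \<le> norm (Scoef nu * Fbnd (nu + 1) (nu - 1) * GF * Cauchy_bound nu x)"
  proof (intro AE_I2)
    fix x
    have "Ig bt nu r x \<le> \<bar>Scoef nu * Fbnd (nu + 1) (nu - 1) * GF * Cauchy_bound nu x\<bar>"
      using Ig_le[OF nu order_refl] by (rule order_trans) simp
    then show "norm (Ig bt nu r x) \<le> norm (Scoef nu * Fbnd (nu + 1) (nu - 1) * GF * Cauchy_bound nu x)"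
      using Ig_nonneg[OF nu] by simp
  qed
qed

lemma Ifun_bounds:
  assumes nu: "nu \<ge> 2" and N: "nu \<le> N"
  shows "0 \<le> Ifun bt nu r" "Ifun bt nu r \<le> Scoef nu * Fbnd (nu + 1) (nu - 1) * GF * integral\<^sup>L lborel (Cauchy_bound N)"
proof -
  show "0 \<le> Ifun bt nu r" unfolding Ifun_Ig using Ig_nonneg[OF nu]
    by (intro integral_nonneg_AE AE_I2) auto
  have "Ifun bt nu r \<le> integral\<^sup>L lborel (\<lambda>t. Scoef nu * Fbnd (nu + 1) (nu - 1) * GF * Cauchy_bound N t)"
    unfolding Ifun_Ig using Ig_le[OF nu N] Cauchy_bound_integrable[of N] nu N
    by (intro integral_mono Ig_integrable[OF nu]) auto
  then show "Ifun bt nu r \<le> Scoef nu * Fbnd (nu + 1) (nu - 1) * GF * integral\<^sup>L lborel (Cauchy_bound N)"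
    by simp
qed

lemma GF_nonneg: "0 \<le> GF"
  unfolding GF_def using gF_nonneg by (intro integral_nonneg_AE AE_I2) auto

lemma sqrt_1_minus_sq_pos: "\<bar>r\<bar> < 1 \<Longrightarrow> 0 < sqrt (1 - r\<^sup>2)"
  by (simp add: abs_square_less_1)

lemma tendsto_t_minus:
  fixes NU R :: "'a \<Rightarrow> real"
  assumes "(NU \<longlongrightarrow> nu) F" "(R \<longlongrightarrow> r) F" "\<bar>r\<bar> < 1"
  shows "((\<lambda>i. t_minus (NU i) (R i)) \<longlongrightarrow> t_minus nu r) F"
  unfolding t_minus_def using assms sqrt_1_minus_sq_pos[OF assms(3)]
  by (intro tendsto_intros) auto

lemma tendsto_t_plus:
  fixes BT NU R :: "'a \<Rightarrow> real"
  assumes "(BT \<longlongrightarrow> bt) F" "(NU \<longlongrightarrow> nu) F" "(R \<longlongrightarrow> r) F" "\<bar>r\<bar> < 1"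
  shows "((\<lambda>i. t_plus (BT i) (NU i) (R i)) \<longlongrightarrow> t_plus bt nu r) F"
  unfolding t_plus_def using assms sqrt_1_minus_sq_pos[OF assms(4)]
  by (intro tendsto_intros) auto

lemma tm_lt_tp:
  assumes bt: "bt > 0" and nu: "nu > 0" and r: "\<bar>r\<bar> < 1"
  shows "t_minus nu r < t_plus bt nu r"
proof -
  have s: "0 < sqrt (1 - r\<^sup>2)" by (rule sqrt_1_minus_sq_pos[OF r])
  have "- sqrt nu * r < sqrt nu * (bt - r)"
    using bt nu by (simp add: algebra_simps)
  then show ?thesis unfolding t_minus_def t_plus_def
    by (rule divide_strict_right_mono[OF _ s])
qed

lemma Ffun_pos:
  assumes nu: "nu \<ge> 2" and t: "t_minus nu r < t" "t < t_plus bt nu r"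
  shows "0 < Ffun t bt nu r"
proof -
  define a where "a = t_minus nu r"
  define b where "b = t_plus bt nu r"
  have "(b - a)\<^sup>2 - (t - a)\<^sup>2 = (b - t) * (b + t - 2 * a)"
    by (simp add: power2_eq_square algebra_simps)
  moreover have "0 < (b - t) * (b + t - 2 * a)"
    using t by (intro mult_pos_pos) (auto simp: a_def b_def)
  ultimately have D: "0 < (b - a)\<^sup>2 - (t - a)\<^sup>2" by simp
  have "0 < (nu - 1) / (nu + 1) * (nu + t\<^sup>2)"
    using nu by (intro mult_pos_pos divide_pos_pos) (auto simp: add_pos_nonneg)
  then show ?thesis unfolding Ffun_def a_def[symmetric] b_def[symmetric]
    by (rule divide_pos_pos[OF _ D])
qed

lemma Ifun_pos:
  assumes bt: "bt > 0" and nu: "nu \<ge> 2" and r: "\<bar>r\<bar> < 1"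
  shows "0 < Ifun bt nu r"
  unfolding Ifun_Ig
proof (rule integral_pos_interval[OF Ig_integrable[OF nu] Ig_nonneg[OF nu]])
  show "t_minus nu r < t_plus bt nu r" using tm_lt_tp[OF bt _ r] nu by simp
  fix t assume t: "t_minus nu r < t" "t < t_plus bt nu r"
  have "0 < F_cdf (Ffun t bt nu r) (nu + 1) (nu - 1)"
    by (rule F_cdf_pos) (use nu Ffun_pos[OF nu t] in auto)
  moreover have "0 < student_t_density t nu" using nu by (intro st_pos) simp
  ultimately show "0 < Ig bt nu r t" using t by (simp add: Ig_def)
qed

lemma Ifun_cont_seq:
  assumes BT: "BT \<longlonglongrightarrow> bt" and NU: "NU \<longlonglongrightarrow> nu" and R: "R \<longlonglongrightarrow> r"
    and NU2: "\<And>i. NU i \<ge> 2" and nu: "nu \<ge> 2" and r: "\<bar>r\<bar> < 1"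
  shows "(\<lambda>i. Ifun (BT i) (NU i) (R i)) \<longlonglongrightarrow> Ifun bt nu r"
proof -
  have "Bseq NU" using NU by (intro convergent_imp_Bseq convergentI)
  then obtain K0 where K0: "\<forall>i. norm (NU i) \<le> K0" unfolding Bseq_def by blast
  define N where "N = max 2 K0"
  have N0: "N > 0" by (simp add: N_def)
  have N1: "NU i \<le> N" for i
    unfolding N_def using K0[rule_format, of i] by (simp add: abs_le_iff le_max_iff_disj)
  note N = N0 N1
  have "((\<lambda>i. Scoef (NU i) * Fbnd (NU i + 1) (NU i - 1)) \<longlongrightarrow> Scoef nu * Fbnd (nu + 1) (nu - 1)) sequentially"
    using nu by (intro tendsto_mult tendsto_Scoef[OF NU] tendsto_Fbnd tendsto_intros NU) auto
  then have "Bseq (\<lambda>i. Scoef (NU i) * Fbnd (NU i + 1) (NU i - 1))" by (intro convergent_imp_Bseq convergentI)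
  then obtain K1 where K1: "\<forall>i. norm (Scoef (NU i) * Fbnd (NU i + 1) (NU i - 1)) \<le> K1"
    unfolding Bseq_def by blast
  have tmT: "(\<lambda>i. t_minus (NU i) (R i)) \<longlonglongrightarrow> t_minus nu r" by (rule tendsto_t_minus[OF NU R r])
  have tpT: "(\<lambda>i. t_plus (BT i) (NU i) (R i)) \<longlonglongrightarrow> t_plus bt nu r" by (rule tendsto_t_plus[OF BT NU R r])
  have "(\<lambda>i. integral\<^sup>L lborel (Ig (BT i) (NU i) (R i))) \<longlonglongrightarrow> integral\<^sup>L lborel (Ig bt nu r)"
  proof (rule integral_dominated_convergence[where w="\<lambda>t. K1 * GF * Cauchy_bound N t"])
    show "Ig bt nu r \<in> borel_measurable lborel" using Ig_measurable[OF nu] by simp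
    show "\<And>i. Ig (BT i) (NU i) (R i) \<in> borel_measurable lborel" using Ig_measurable[OF NU2] by simp
    show "integrable lborel (\<lambda>t. K1 * GF * Cauchy_bound N t)" using Cauchy_bound_integrable[OF N(1)] by simp
    show "\<And>i. AE t in lborel. norm (Ig (BT i) (NU i) (R i) t) \<le> K1 * GF * Cauchy_bound N t"
    proof (intro AE_I2)
      fix i t
      have "Ig (BT i) (NU i) (R i) t \<le> Scoef (NU i) * Fbnd (NU i + 1) (NU i - 1) * GF * Cauchy_bound N t"
        by (rule Ig_le[OF NU2 N(2)])
      also have "\<dots> = (Scoef (NU i) * Fbnd (NU i + 1) (NU i - 1)) * (GF * Cauchy_bound N t)" by simp
      also have "\<dots> \<le> K1 * (GF * Cauchy_bound N t)"
        using K1 GF_nonneg Cauchy_bound_nonneg[OF N(1), of t]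
        by (intro mult_right_mono) (auto intro: order_trans[OF abs_ge_self])
      finally show "norm (Ig (BT i) (NU i) (R i) t) \<le> K1 * GF * Cauchy_bound N t"
        using Ig_nonneg[OF NU2] by (simp add: mult.assoc)
    qed
    show "AE t in lborel. (\<lambda>i. Ig (BT i) (NU i) (R i) t) \<longlonglongrightarrow> Ig bt nu r t"
    proof (rule eventually_mono[OF eventually_conj[OF AE_lborel_singleton[of "t_minus nu r"] AE_lborel_singleton[of "t_plus bt nu r"]]])
      fix t :: real assume tt: "t \<noteq> t_minus nu r \<and> t \<noteq> t_plus bt nu r"
      consider "t < t_minus nu r" | "t > t_plus bt nu r" | "t_minus nu r < t \<and> t < t_plus bt nu r"
        using tt by fastforce
      then show "(\<lambda>i. Ig (BT i) (NU i) (R i) t) \<longlonglongrightarrow> Ig bt nu r t"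
      proof cases
        case 1
        have "eventually (\<lambda>i. t < t_minus (NU i) (R i)) sequentially"
          using tmT 1 by (rule order_tendstoD)
        then have "eventually (\<lambda>i. Ig (BT i) (NU i) (R i) t = 0) sequentially"
          by eventually_elim (simp add: Ig_def)
        then have "(\<lambda>i. Ig (BT i) (NU i) (R i) t) \<longlonglongrightarrow> 0" by (rule tendsto_eventually)
        moreover have "Ig bt nu r t = 0" using 1 by (simp add: Ig_def)
        ultimately show ?thesis by simp
      next
        case 2
        have "eventually (\<lambda>i. t_plus (BT i) (NU i) (R i) < t) sequentially"
          using tpT 2 by (rule order_tendstoD)
        then have "eventually (\<lambda>i. Ig (BT i) (NU i) (R i) t = 0) sequentially"
          by eventually_elim (simp add: Ig_def)
        then have "(\<lambda>i. Ig (BT i) (NU i) (R i) t) \<longlonglongrightarrow> 0" by (rule tendsto_eventually)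
        moreover have "Ig bt nu r t = 0" using 2 by (simp add: Ig_def)
        ultimately show ?thesis by simp
      next
        case 3
        have e1: "eventually (\<lambda>i. t_minus (NU i) (R i) < t) sequentially"
          using tmT 3 by (intro order_tendstoD) auto
        have e2: "eventually (\<lambda>i. t < t_plus (BT i) (NU i) (R i)) sequentially"
          using tpT 3 by (intro order_tendstoD) auto
        have ev: "eventually (\<lambda>i. student_t_density t (NU i) * F_cdf (Ffun t (BT i) (NU i) (R i)) (NU i + 1) (NU i - 1)
                 = Ig (BT i) (NU i) (R i) t) sequentially"
          using e1 e2 by eventually_elim (simp add: Ig_def)
        define a where "a = t_minus nu r"
        define b where "b = t_plus bt nu r"
        have "(b - a)\<^sup>2 - (t - a)\<^sup>2 = (b - t) * (b + t - 2 * a)"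
          by (simp add: power2_eq_square algebra_simps)
        moreover have "0 < (b - t) * (b + t - 2 * a)"
          using 3 by (intro mult_pos_pos) (auto simp: a_def b_def)
        ultimately have Dpos: "0 < (b - a)\<^sup>2 - (t - a)\<^sup>2" by simp
        have D: "(\<lambda>i. (t_plus (BT i) (NU i) (R i) - t_minus (NU i) (R i))\<^sup>2 - (t - t_minus (NU i) (R i))\<^sup>2)
                 \<longlonglongrightarrow> (b - a)\<^sup>2 - (t - a)\<^sup>2"
          unfolding a_def b_def by (intro tendsto_diff tendsto_power tmT tpT tendsto_const)
        have FF: "(\<lambda>i. Ffun t (BT i) (NU i) (R i)) \<longlonglongrightarrow> Ffun t bt nu r"
          unfolding Ffun_def a_def[symmetric] b_def[symmetric]
          using nu by (intro tendsto_divide D tendsto_mult NU tendsto_intros) (use Dpos in auto)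
        have "(\<lambda>i. student_t_density t (NU i) * F_cdf (Ffun t (BT i) (NU i) (R i)) (NU i + 1) (NU i - 1))
              \<longlonglongrightarrow> student_t_density t nu * F_cdf (Ffun t bt nu r) (nu + 1) (nu - 1)"
        proof (rule tendsto_mult)
          show "(\<lambda>i. student_t_density t (NU i)) \<longlonglongrightarrow> student_t_density t nu"
            using nu by (intro tendsto_st[OF NU]) simp
          show "(\<lambda>i. F_cdf (Ffun t (BT i) (NU i) (R i)) (NU i + 1) (NU i - 1)) \<longlonglongrightarrow> F_cdf (Ffun t bt nu r) (nu + 1) (nu - 1)"
          proof (rule F_cdf_cont_seq[OF FF])
            show "\<And>i. 2 \<le> NU i + 1" using NU2 by (smt (verit))
            show "\<And>i. 1 \<le> NU i - 1" using NU2 by (smt (verit))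
          qed (use NU nu in \<open>auto intro!: tendsto_intros\<close>)
        qed
        then have "(\<lambda>i. Ig (BT i) (NU i) (R i) t) \<longlonglongrightarrow> student_t_density t nu * F_cdf (Ffun t bt nu r) (nu + 1) (nu - 1)"
          using ev by (rule Lim_transform_eventually)
        moreover have "Ig bt nu r t = student_t_density t nu * F_cdf (Ffun t bt nu r) (nu + 1) (nu - 1)"
          using 3 by (simp add: Ig_def)
        ultimately show ?thesis by simp
      qed
    qed
  qed
  then show ?thesis by (simp add: Ifun_Ig)
qed

lemma Ifun_tendsto_at:
  fixes BT NU R :: "real \<Rightarrow> real"
  assumes BT: "(BT \<longlongrightarrow> bt) (at a within s)" and NU: "(NU \<longlongrightarrow> nu) (at a within s)"
    and R: "(R \<longlongrightarrow> r) (at a within s)"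
    and NU2: "\<And>y. y \<in> s \<Longrightarrow> NU y \<ge> 2" and nu: "nu \<ge> 2" and r: "\<bar>r\<bar> < 1"
  shows "((\<lambda>y. Ifun (BT y) (NU y) (R y)) \<longlongrightarrow> Ifun bt nu r) (at a within s)"
  unfolding tendsto_at_iff_sequentially
proof (intro allI impI)
  fix X :: "nat \<Rightarrow> real" assume X: "\<forall>i. X i \<in> s - {a}" "X \<longlonglongrightarrow> a"
  have 1: "(BT \<circ> X) \<longlonglongrightarrow> bt" using BT X unfolding tendsto_at_iff_sequentially by blast
  have 2: "(NU \<circ> X) \<longlonglongrightarrow> nu" using NU X unfolding tendsto_at_iff_sequentially by blast
  have 3: "(R \<circ> X) \<longlonglongrightarrow> r" using R X unfolding tendsto_at_iff_sequentially by blast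
  have "(\<lambda>i. Ifun ((BT \<circ> X) i) ((NU \<circ> X) i) ((R \<circ> X) i)) \<longlonglongrightarrow> Ifun bt nu r"
    by (rule Ifun_cont_seq[OF 1 2 3 _ nu r]) (use X NU2 in auto)
  then show "((\<lambda>y. Ifun (BT y) (NU y) (R y)) \<circ> X) \<longlonglongrightarrow> Ifun bt nu r"
    by (simp add: comp_def)
qed

lemma Jfun_tendsto_at:
  fixes B NU R L :: "real \<Rightarrow> real"
  assumes B: "(B \<longlongrightarrow> b) (at a within s)" and NU: "(NU \<longlongrightarrow> nu) (at a within s)"
    and R: "(R \<longlongrightarrow> r) (at a within s)" and L: "(L \<longlongrightarrow> l) (at a within s)"
    and NU2: "\<And>y. y \<in> s \<Longrightarrow> NU y \<ge> 2" and nu: "nu \<ge> 2" and r: "\<bar>r\<bar> < 1"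
    and b: "b \<noteq> 0" and l: "l > 0"
  shows "((\<lambda>y. Jfun (B y) (NU y) (R y) (L y)) \<longlongrightarrow> Jfun b nu r l) (at a within s)"
proof -
  have rs: "\<bar>r * sgn b\<bar> < 1" using r b by (simp add: abs_mult)
  have RS: "((\<lambda>y. R y * sgn (B y)) \<longlongrightarrow> r * sgn b) (at a within s)"
    using R B b by (intro tendsto_intros) auto
  have 1: "((\<lambda>y. Ifun (\<bar>B y\<bar> / L y) (NU y) (R y * sgn (B y))) \<longlongrightarrow> Ifun (\<bar>b\<bar> / l) nu (r * sgn b)) (at a within s)"
    by (rule Ifun_tendsto_at[OF _ NU RS NU2 nu rs]) (use B L l in \<open>auto intro!: tendsto_intros\<close>)
  have 2: "((\<lambda>y. Ifun (L y / \<bar>B y\<bar>) (NU y) (R y * sgn (B y))) \<longlongrightarrow> Ifun (l / \<bar>b\<bar>) nu (r * sgn b)) (at a within s)"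
    by (rule Ifun_tendsto_at[OF _ NU RS NU2 nu rs]) (use B L b in \<open>auto intro!: tendsto_intros\<close>)
  show ?thesis unfolding Jfun_def by (rule tendsto_add[OF 1 2])
qed

lemma Jfun_scale: "l > 0 \<Longrightarrow> Jfun b nu r l = Jfun (b / l) nu r 1"
  by (simp add: Jfun_def abs_divide)

lemma Jfun_nonneg: "nu \<ge> 2 \<Longrightarrow> 0 \<le> Jfun b nu r l"
  unfolding Jfun_def using Ifun_bounds(1)[of nu nu] by (simp add: add_nonneg_nonneg)

lemma Jfun_pos:
  assumes "nu \<ge> 2" "\<bar>r\<bar> < 1" "l > 0" "b \<noteq> 0"
  shows "0 < Jfun b nu r l"
proof -
  have rs: "\<bar>r * sgn b\<bar> < 1" using assms by (simp add: abs_mult)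
  have "0 < Ifun (\<bar>b\<bar> / l) nu (r * sgn b)" using assms by (intro Ifun_pos rs) auto
  moreover have "0 < Ifun (l / \<bar>b\<bar>) nu (r * sgn b)" using assms by (intro Ifun_pos rs) auto
  ultimately show ?thesis unfolding Jfun_def by simp
qed

lemma Jfun_le:
  assumes nu: "nu \<ge> 2" and N: "nu \<le> N"
  shows "Jfun b nu r l \<le> 2 * (Scoef nu * Fbnd (nu + 1) (nu - 1) * GF * integral\<^sup>L lborel (Cauchy_bound N))"
  unfolding Jfun_def using Ifun_bounds(2)[OF nu N] by (smt (verit))

lemma qform2:
  fixes A :: "real^2^2"
  shows "(vector [a, b] :: real^2) \<bullet> (A *v vector [a, b]) = A$1$1 * a * a + A$1$2 * a * b + A$2$1 * b * a + A$2$2 * b * b"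
  by (simp add: inner_vec_def matrix_vector_mult_def sum_2 algebra_simps)

lemma vector2_nonzero: "a \<noteq> 0 \<or> b \<noteq> 0 \<Longrightarrow> (vector [a, b] :: real^2) \<noteq> 0"
  by (auto simp: vec_eq_iff forall_2)

lemma pos_def2_facts:
  fixes S :: "real^2^2"
  assumes "pos_def2 S"
  shows "S$2$1 = S$1$2" "S$1$1 > 0" "S$2$2 > 0" "(S$1$2)\<^sup>2 < S$1$1 * S$2$2"
proof -
  have T: "transpose S = S" and P: "\<And>x::real^2. x \<noteq> 0 \<Longrightarrow> 0 < x \<bullet> (S *v x)"
    using assms by (auto simp: pos_def2_def)
  have "(transpose S)$1$2 = S$1$2" using T by simp
  then show sym: "S$2$1 = S$1$2" by (simp add: transpose_def)
  have "0 < (vector [1, 0] :: real^2) \<bullet> (S *v vector [1, 0])" by (rule P[OF vector2_nonzero]) simp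
  then show s11: "S$1$1 > 0" by (simp add: qform2)
  have "0 < (vector [0, 1] :: real^2) \<bullet> (S *v vector [0, 1])" by (rule P[OF vector2_nonzero]) simp
  then show "S$2$2 > 0" by (simp add: qform2)
  have "0 < (vector [S$1$2, - S$1$1] :: real^2) \<bullet> (S *v vector [S$1$2, - S$1$1])"
    by (rule P[OF vector2_nonzero]) (use s11 in simp)
  then have "0 < S$1$1 * (S$1$1 * S$2$2 - (S$1$2)\<^sup>2)"
    by (simp add: qform2 sym power2_eq_square algebra_simps)
  then have "0 < S$1$1 * S$2$2 - (S$1$2)\<^sup>2" using s11 by (simp add: zero_less_mult_iff)
  then show "(S$1$2)\<^sup>2 < S$1$1 * S$2$2" by simp
qed

lemma part1:
  fixes n :: nat and S :: "real^2^2" and kappa0 rho0 :: real and p :: "real \<Rightarrow> real" and b :: real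
  assumes n: "n \<ge> 3" and S: "pos_def2 S" and rho: "-1 < rho0" "rho0 < 1" and kap: "kappa0 > 0"
    and p: "proper_density p" and b: "b \<noteq> 0"
  shows "((\<lambda>nu0. posterior p n nu0 kappa0 rho0 S b) \<longlongrightarrow>
          p b * Jfun b (real n - 1) (r_of S) (l_of S) / (LINT b'|lborel. p b' * Jfun b' (real n - 1) (r_of S) (l_of S))) (at_right 0)"
proof -
  define nu where "nu = real n - 1"
  have nu2: "nu \<ge> 2" using n by (simp add: nu_def)
  have nu0: "nu > 0" using nu2 by simp
  have pm[measurable]: "p \<in> borel_measurable lborel" and pnn: "\<And>x. 0 \<le> p x"
    and pint: "integrable lborel p" and p1: "integral\<^sup>L lborel p = 1"
    using p by (auto simp: proper_density_def)
  note SF = pos_def2_facts[OF S]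
  define a11 where "a11 = S$1$1"
  define a12 where "a12 = S$1$2"
  define a22 where "a22 = S$2$2"
  have a11: "a11 > 0" and a22: "a22 > 0" and a12sq: "a12\<^sup>2 < a11 * a22" and a21: "S$2$1 = a12"
    using SF by (auto simp: a11_def a12_def a22_def)
  define k where "k = kappa0\<^sup>2"
  have k: "k > 0" using kap by (simp add: k_def)
  define d where "d = a11 * a22 - a12\<^sup>2"
  have d: "d > 0" using a12sq by (simp add: d_def)
  define sr where "sr = sqrt (1 - rho0\<^sup>2)"
  have rho2: "rho0\<^sup>2 < 1" using rho by (simp add: abs_square_less_1)
  have sr: "sr > 0" using rho2 by (simp add: sr_def)
  have sr2: "sr\<^sup>2 = 1 - rho0\<^sup>2" using rho2 by (simp add: sr_def)
  define m11 where "m11 x = x * k + nu * a11" for x :: real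
  define m22 where "m22 x c = x * k * c\<^sup>2 + nu * a22" for x c :: real
  define m12 where "m12 x c = x * k * (rho0 * c) + nu * a12" for x c :: real
  define Dt where "Dt x c = m11 x * m22 x c - m12 x c * m12 x c" for x c
  define Rr where "Rr x c = m12 x c / sqrt (m11 x * m22 x c)" for x c
  define Ll where "Ll x c = sqrt (m22 x c / m11 x)" for x c
  have Mc: "(Psi0 x kappa0 rho0 c + nu *\<^sub>R S)$1$1 = m11 x"
     "(Psi0 x kappa0 rho0 c + nu *\<^sub>R S)$1$2 = m12 x c"
     "(Psi0 x kappa0 rho0 c + nu *\<^sub>R S)$2$1 = m12 x c"
     "(Psi0 x kappa0 rho0 c + nu *\<^sub>R S)$2$2 = m22 x c" for x c
    by (simp_all add: Psi0_def m11_def m12_def m22_def k_def a11_def a12_def a22_def a21 algebra_simps)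
  define H where "H x c = \<bar>c\<bar> powr x * Dt x c powr (- (x + nu) / 2) * Jfun c (x + nu) (Rr x c) (Ll x c)" for x c
  have post_eq: "post_unnorm p n x kappa0 rho0 S c = p c * H x c" for x c
    unfolding post_unnorm_def Let_def nu_def[symmetric] H_def det_2 r_of_def l_of_def Mc
    by (simp add: Dt_def Rr_def Ll_def mult.assoc)
  have m11pos: "0 \<le> x \<Longrightarrow> 0 < m11 x" for x
    unfolding m11_def using k nu0 a11 by (simp add: add_nonneg_pos)
  have m22pos: "0 \<le> x \<Longrightarrow> 0 < m22 x c" for x c
    unfolding m22_def using k nu0 a22 by (simp add: add_nonneg_pos)
  define Q where "Q c = a22 + c\<^sup>2 * a11 - 2 * rho0 * c * a12" for c
  have Dt_exp: "Dt x c = x\<^sup>2 * k\<^sup>2 * sr\<^sup>2 * c\<^sup>2 + x * k * nu * Q c + nu\<^sup>2 * d" for x c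
    unfolding Dt_def m11_def m12_def m22_def Q_def d_def sr2 by (simp add: power2_eq_square algebra_simps)
  have Qnn: "0 \<le> Q c" for c
  proof -
    have "a11 * Q c = (a11 * c - rho0 * a12)\<^sup>2 + (a11 * a22 - rho0\<^sup>2 * a12\<^sup>2)"
      unfolding Q_def by (simp add: power2_eq_square algebra_simps)
    moreover have "rho0\<^sup>2 * a12\<^sup>2 \<le> a12\<^sup>2" using rho2 by (simp add: mult_left_le_one_le)
    ultimately have "0 \<le> a11 * Q c" using a12sq by (smt (verit) zero_le_power2)
    then show ?thesis using a11 by (simp add: zero_le_mult_iff)
  qed
  have Dt_ge1: "0 \<le> x \<Longrightarrow> nu\<^sup>2 * d \<le> Dt x c" for x c
    unfolding Dt_exp using Qnn[of c] k nu0 by (simp add: add_nonneg_nonneg)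
  have Dt_ge2: "0 \<le> x \<Longrightarrow> (x * k * sr * \<bar>c\<bar>)\<^sup>2 \<le> Dt x c" for x c
  proof -
    assume x: "0 \<le> x"
    have "0 \<le> x * k * nu * Q c + nu\<^sup>2 * d" using Qnn[of c] k nu0 d x by simp
    then show ?thesis unfolding Dt_exp by (simp add: power_mult_distrib)
  qed
  have Dt_pos: "0 \<le> x \<Longrightarrow> 0 < Dt x c" for x c
    using Dt_ge1[of x c] d nu0 by (smt (verit) mult_pos_pos zero_less_power)
  have Rr_abs: "0 \<le> x \<Longrightarrow> \<bar>Rr x c\<bar> < 1" for x c
  proof -
    assume x: "0 \<le> x"
    have P: "0 < m11 x * m22 x c" using m11pos[OF x] m22pos[OF x] by simp
    have "(m12 x c)\<^sup>2 < m11 x * m22 x c" using Dt_pos[OF x, of c] by (simp add: Dt_def power2_eq_square)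
    then have "sqrt ((m12 x c)\<^sup>2) < sqrt (m11 x * m22 x c)" by (rule real_sqrt_less_mono)
    then have "\<bar>m12 x c\<bar> < sqrt (m11 x * m22 x c)" by simp
    moreover have "0 < sqrt (m11 x * m22 x c)" using P by simp
    ultimately show ?thesis unfolding Rr_def abs_divide by (simp add: divide_less_eq_1_pos)
  qed
  have Ll_pos: "0 \<le> x \<Longrightarrow> 0 < Ll x c" for x c
    using m11pos[of x] m22pos[of x c] by (simp add: Ll_def)
  have Rr0: "Rr 0 c = r_of S" for c
  proof -
    have "sqrt (nu * a11 * (nu * a22)) = nu * sqrt (a11 * a22)"
      using nu0 by (simp add: real_sqrt_mult power2_eq_square[symmetric] mult_ac)
    then show ?thesis using nu0 by (simp add: Rr_def m11_def m12_def m22_def r_of_def a11_def a12_def a22_def mult_ac)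
  qed
  have Ll0: "Ll 0 c = l_of S" for c
    using nu0 by (simp add: Ll_def m11_def m22_def l_of_def a11_def a22_def)
  have Dt0: "Dt 0 c = nu\<^sup>2 * d" for c
    by (simp add: Dt_exp)
  have r1: "\<bar>r_of S\<bar> < 1" using Rr_abs[of 0 0] by (simp add: Rr0)
  have l0: "l_of S > 0" using Ll_pos[of 0 0] by (simp add: Ll0)
  have Dt_T: "((\<lambda>y. Dt (X y) (Cf y)) \<longlongrightarrow> Dt x0 c0) F" if "(X \<longlongrightarrow> x0) F" "(Cf \<longlongrightarrow> c0) F" for X Cf x0 c0 and F :: "real filter"
    unfolding Dt_def m11_def m12_def m22_def using that by (intro tendsto_intros)
  have Rr_T: "((\<lambda>y. Rr (X y) (Cf y)) \<longlongrightarrow> Rr x0 c0) F" if "(X \<longlongrightarrow> x0) F" "(Cf \<longlongrightarrow> c0) F" "0 \<le> x0" for X Cf x0 c0 and F :: "real filter"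
  proof -
    have "0 < m11 x0 * m22 x0 c0" using m11pos[OF that(3)] m22pos[OF that(3)] by simp
    then show ?thesis unfolding Rr_def using that(1,2)
      by (intro tendsto_divide tendsto_real_sqrt tendsto_mult) (auto simp: m11_def m12_def m22_def intro!: tendsto_intros)
  qed
  have Ll_T: "((\<lambda>y. Ll (X y) (Cf y)) \<longlongrightarrow> Ll x0 c0) F" if "(X \<longlongrightarrow> x0) F" "(Cf \<longlongrightarrow> c0) F" "0 \<le> x0" for X Cf x0 c0 and F :: "real filter"
  proof -
    have "0 < m11 x0" using m11pos[OF that(3)] by simp
    then show ?thesis unfolding Ll_def using that(1,2)
      by (intro tendsto_divide tendsto_real_sqrt) (auto simp: m11_def m12_def m22_def intro!: tendsto_intros)
  qed
  define C0 where "C0 = (nu\<^sup>2 * d) powr (- nu / 2)"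
  have C0: "C0 > 0" using d nu0 by (simp add: C0_def)
  define J0 where "J0 c = Jfun c nu (r_of S) (l_of S)" for c
  have stepA: "((\<lambda>x. H x c) \<longlongrightarrow> C0 * J0 c) (at_right 0)" if c: "c \<noteq> 0" for c
  proof -
    have 1: "((\<lambda>x. \<bar>c\<bar> powr x) \<longlongrightarrow> \<bar>c\<bar> powr 0) (at_right 0)"
      using c by (intro tendsto_powr tendsto_const tendsto_ident_at) auto
    have 2: "((\<lambda>x. Dt x c powr (- (x + nu) / 2)) \<longlongrightarrow> Dt 0 c powr (- (0 + nu) / 2)) (at_right 0)"
      using Dt_pos[of 0 c]
      by (intro tendsto_powr Dt_T tendsto_ident_at tendsto_const tendsto_intros) auto
    have 3: "((\<lambda>x. Jfun c (x + nu) (Rr x c) (Ll x c)) \<longlongrightarrow> Jfun c (0 + nu) (Rr 0 c) (Ll 0 c)) (at_right 0)"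
    proof (rule Jfun_tendsto_at)
      show "((\<lambda>x. Rr x c) \<longlongrightarrow> Rr 0 c) (at_right 0)" by (intro Rr_T tendsto_ident_at tendsto_const) simp
      show "((\<lambda>x. Ll x c) \<longlongrightarrow> Ll 0 c) (at_right 0)" by (intro Ll_T tendsto_ident_at tendsto_const) simp
      show "((\<lambda>x. x + nu) \<longlongrightarrow> 0 + nu) (at_right 0)" by (intro tendsto_intros)
    qed (use nu2 c Rr_abs[of 0 c] Ll_pos[of 0 c] in auto)
    have "((\<lambda>x. H x c) \<longlongrightarrow> \<bar>c\<bar> powr 0 * Dt 0 c powr (- (0 + nu) / 2) * Jfun c (0 + nu) (Rr 0 c) (Ll 0 c)) (at_right 0)"
      unfolding H_def by (intro tendsto_mult 1 2 3)
    then show ?thesis using c by (simp add: Dt0 Rr0 Ll0 C0_def J0_def)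
  qed
  have Hmeas: "(\<lambda>c. H x c) \<in> borel_measurable lborel" if x: "0 \<le> x" for x
  proof -
    have "continuous_on (- {0}) (\<lambda>c. H x c)"
    proof (rule continuous_at_imp_continuous_on, intro ballI)
      fix c0 :: real assume "c0 \<in> - {0}"
      then have c0: "c0 \<noteq> 0" by simp
      have 1: "((\<lambda>c. \<bar>c\<bar> powr x) \<longlongrightarrow> \<bar>c0\<bar> powr x) (at c0)"
        using c0 by (intro tendsto_powr tendsto_const tendsto_intros) auto
      have 2: "((\<lambda>c. Dt x c powr (- (x + nu) / 2)) \<longlongrightarrow> Dt x c0 powr (- (x + nu) / 2)) (at c0)"
        using Dt_pos[OF x, of c0] by (intro tendsto_powr Dt_T tendsto_ident_at tendsto_const) auto
      have 3: "((\<lambda>c. Jfun c (x + nu) (Rr x c) (Ll x c)) \<longlongrightarrow> Jfun c0 (x + nu) (Rr x c0) (Ll x c0)) (at c0)"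
      proof (rule Jfun_tendsto_at)
        show "((\<lambda>c. Rr x c) \<longlongrightarrow> Rr x c0) (at c0)" by (intro Rr_T tendsto_ident_at tendsto_const x)
        show "((\<lambda>c. Ll x c) \<longlongrightarrow> Ll x c0) (at c0)" by (intro Ll_T tendsto_ident_at tendsto_const x)
        show "((\<lambda>c. c) \<longlongrightarrow> c0) (at c0)" by (rule tendsto_ident_at)
      qed (use nu2 x c0 Rr_abs[OF x, of c0] Ll_pos[OF x, of c0] in auto)
      show "isCont (\<lambda>c. H x c) c0" unfolding isCont_def H_def by (intro tendsto_mult 1 2 3)
    qed
    then have "(\<lambda>c. H x c) \<in> borel_measurable borel"
      by (intro borel_measurable_continuous_countable_exceptions[of "{0}"]) auto
    then show ?thesis by simp
  qed
  have J0meas: "J0 \<in> borel_measurable lborel"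
  proof -
    have "continuous_on (- {0}) J0"
    proof (rule continuous_at_imp_continuous_on, intro ballI)
      fix c0 :: real assume "c0 \<in> - {0}"
      then have c0: "c0 \<noteq> 0" by simp
      show "isCont J0 c0" unfolding isCont_def J0_def
        by (rule Jfun_tendsto_at[where s=UNIV]) (use nu2 c0 r1 l0 in \<open>auto intro!: tendsto_intros\<close>)
    qed
    then have "J0 \<in> borel_measurable borel"
      by (intro borel_measurable_continuous_countable_exceptions[of "{0}"]) auto
    then show ?thesis by simp
  qed
  define G where "G x = (x * k * sr) powr (- x)" for x
  have pw_bound: "\<bar>c\<bar> powr x * Dt x c powr (- (x + nu) / 2) \<le> G x * C0" if x: "0 < x" for x c
  proof (cases "c = 0")
    case True
    then show ?thesis using C0 by (simp add: G_def)
  next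
    case False
    define y where "y = x * k * sr * \<bar>c\<bar>"
    have y: "y > 0" using x k sr False by (simp add: y_def)
    have D: "0 < Dt x c" using Dt_pos x by simp
    have e: "Dt x c powr (- (x + nu) / 2) = Dt x c powr (- x / 2) * Dt x c powr (- nu / 2)"
    proof -
      have ex: "- (x + nu) / 2 = - x / 2 + - nu / 2" by (simp add: field_simps)
      show ?thesis unfolding ex by (rule powr_add)
    qed
    have b1: "Dt x c powr (- nu / 2) \<le> C0"
      unfolding C0_def by (rule powr_mono2') (use nu0 d Dt_ge1[of x c] x in auto)
    have "Dt x c powr (- x / 2) \<le> (y\<^sup>2) powr (- x / 2)"
      by (rule powr_mono2') (use x y Dt_ge2[of x c] in \<open>auto simp: y_def\<close>)
    also have "(y\<^sup>2) powr (- x / 2) = y powr (- x)"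
    proof -
      have "(y\<^sup>2) = y powr 2" using y by simp
      then show ?thesis by (simp add: powr_powr)
    qed
    finally have b2: "Dt x c powr (- x / 2) \<le> y powr (- x)" .
    have "\<bar>c\<bar> powr x * Dt x c powr (- (x + nu) / 2) \<le> \<bar>c\<bar> powr x * (y powr (- x) * C0)"
      unfolding e by (intro mult_left_mono mult_mono b1 b2) auto
    also have "\<bar>c\<bar> powr x * (y powr (- x) * C0) = G x * C0 * (\<bar>c\<bar> powr x * \<bar>c\<bar> powr (- x))"
      unfolding y_def G_def using x k sr False by (simp add: powr_mult mult_ac)
    also have "\<bar>c\<bar> powr x * \<bar>c\<bar> powr (- x) = 1"
      using False by (simp add: powr_add[symmetric])
    finally show ?thesis by simp
  qed
  have Hnn: "0 \<le> H x c" if "0 \<le> x" for x c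
    unfolding H_def using Jfun_nonneg[of "x + nu"] nu2 that by simp
  have G_T: "(G \<longlongrightarrow> 1) (at_right 0)"
  proof -
    have "k * sr > 0" using k sr by simp
    then have "((\<lambda>x. (x * (k * sr)) powr (- x)) \<longlongrightarrow> 1) (at_right 0)" by real_asymp
    then show ?thesis by (simp add: G_def[abs_def] mult.assoc)
  qed
  define CI where "CI N = integral\<^sup>L lborel (Cauchy_bound N)" for N
  have CI: "N > 0 \<Longrightarrow> 0 \<le> CI N" for N
    unfolding CI_def using Cauchy_bound_nonneg by (intro integral_nonneg_AE AE_I2) auto
  have pJ0_int: "integrable lborel (\<lambda>c. p c * J0 c)"
  proof (rule Bochner_Integration.integrable_bound)
    show "integrable lborel (\<lambda>c. p c * (2 * (Scoef nu * Fbnd (nu + 1) (nu - 1) * GF * CI nu)))"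
      using pint by simp
    show "(\<lambda>c. p c * J0 c) \<in> borel_measurable lborel" using J0meas by measurable
    show "AE c in lborel. norm (p c * J0 c) \<le> norm (p c * (2 * (Scoef nu * Fbnd (nu + 1) (nu - 1) * GF * CI nu)))"
    proof (intro AE_I2)
      fix c
      have "J0 c \<le> 2 * (Scoef nu * Fbnd (nu + 1) (nu - 1) * GF * CI nu)"
        unfolding J0_def CI_def by (rule Jfun_le[OF nu2 order_refl])
      then have "p c * J0 c \<le> p c * (2 * (Scoef nu * Fbnd (nu + 1) (nu - 1) * GF * CI nu))"
        using pnn[of c] by (rule mult_left_mono)
      moreover have "0 \<le> p c * J0 c" using pnn[of c] Jfun_nonneg[OF nu2] by (simp add: J0_def)
      ultimately show "norm (p c * J0 c) \<le> norm (p c * (2 * (Scoef nu * Fbnd (nu + 1) (nu - 1) * GF * CI nu)))"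
        by simp
    qed
  qed
  have stepC: "((\<lambda>x. integral\<^sup>L lborel (\<lambda>c. p c * H x c)) \<longlongrightarrow> integral\<^sup>L lborel (\<lambda>c. p c * (C0 * J0 c))) (at_right 0)"
    unfolding tendsto_at_iff_sequentially
  proof (intro allI impI)
    fix X :: "nat \<Rightarrow> real" assume X: "\<forall>i. X i \<in> {0<..} - {0}" "X \<longlonglongrightarrow> 0"
    have Xpos: "0 < X i" for i using X(1) by auto
    have "Bseq X" using X(2) by (intro convergent_imp_Bseq convergentI)
    then obtain K0 where K0: "\<forall>i. norm (X i) \<le> K0" unfolding Bseq_def by blast
    define N where "N = nu + K0"
    have N: "X i + nu \<le> N" for i using K0[rule_format, of i] Xpos[of i] by (simp add: N_def)
    have N0: "N > 0" using N[of 0] Xpos[of 0] nu0 by simp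
    have "(G \<circ> X) \<longlonglongrightarrow> 1" using G_T X unfolding tendsto_at_iff_sequentially by blast
    then have "Bseq (G \<circ> X)" by (intro convergent_imp_Bseq convergentI)
    then obtain KG where KG: "\<forall>i. norm ((G \<circ> X) i) \<le> KG" unfolding Bseq_def by blast
    have "(\<lambda>i. Scoef (X i + nu) * Fbnd (X i + nu + 1) (X i + nu - 1)) \<longlonglongrightarrow> Scoef (0 + nu) * Fbnd (0 + nu + 1) (0 + nu - 1)"
      using nu2 by (intro tendsto_mult tendsto_Scoef tendsto_Fbnd tendsto_intros X(2)) auto
    then have "Bseq (\<lambda>i. Scoef (X i + nu) * Fbnd (X i + nu + 1) (X i + nu - 1))"
      by (intro convergent_imp_Bseq convergentI)
    then obtain K1 where K1: "\<forall>i. norm (Scoef (X i + nu) * Fbnd (X i + nu + 1) (X i + nu - 1)) \<le> K1"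
      unfolding Bseq_def by blast
    define W where "W = KG * C0 * (2 * (K1 * GF * CI N))"
    have "(\<lambda>i. integral\<^sup>L lborel (\<lambda>c. p c * H (X i) c)) \<longlonglongrightarrow> integral\<^sup>L lborel (\<lambda>c. p c * (C0 * J0 c))"
    proof (rule integral_dominated_convergence[where w="\<lambda>c. p c * W"])
      show "(\<lambda>c. p c * (C0 * J0 c)) \<in> borel_measurable lborel" using J0meas by measurable
      show "\<And>i. (\<lambda>c. p c * H (X i) c) \<in> borel_measurable lborel"
        using Hmeas[OF less_imp_le[OF Xpos]] by measurable
      show "integrable lborel (\<lambda>c. p c * W)" using pint by simp
      show "AE c in lborel. (\<lambda>i. p c * H (X i) c) \<longlonglongrightarrow> p c * (C0 * J0 c)"
      proof (rule eventually_mono[OF AE_lborel_singleton[of 0]])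
        fix c :: real assume c: "c \<noteq> 0"
        have "((\<lambda>x. H x c) \<circ> X) \<longlonglongrightarrow> C0 * J0 c"
          using stepA[OF c] X unfolding tendsto_at_iff_sequentially by blast
        then show "(\<lambda>i. p c * H (X i) c) \<longlonglongrightarrow> p c * (C0 * J0 c)"
          by (intro tendsto_mult_left) (simp add: comp_def)
      qed
      show "\<And>i. AE c in lborel. norm (p c * H (X i) c) \<le> p c * W"
      proof (intro AE_I2)
        fix i c
        have x: "0 < X i" by (rule Xpos)
        have J: "Jfun c (X i + nu) (Rr (X i) c) (Ll (X i) c) \<le> 2 * (K1 * GF * CI N)"
        proof -
          have "Jfun c (X i + nu) (Rr (X i) c) (Ll (X i) c)
               \<le> 2 * (Scoef (X i + nu) * Fbnd (X i + nu + 1) (X i + nu - 1) * GF * CI N)"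
            unfolding CI_def by (rule Jfun_le) (use x nu2 N in auto)
          also have "\<dots> \<le> 2 * (K1 * GF * CI N)"
            using K1[rule_format, of i] GF_nonneg CI[OF N0]
            by (intro mult_left_mono mult_right_mono) (auto intro: order_trans[OF abs_ge_self])
          finally show ?thesis .
        qed
        have GX: "G (X i) \<le> KG" using KG[rule_format, of i] by (auto intro: order_trans[OF abs_ge_self])
        have "H (X i) c \<le> (G (X i) * C0) * (2 * (K1 * GF * CI N))"
          unfolding H_def
          by (intro mult_mono pw_bound x J) (use Jfun_nonneg[of "X i + nu"] nu2 x C0 in \<open>auto simp: G_def\<close>)
        also have "\<dots> \<le> W"
          unfolding W_def using GX C0 GF_nonneg CI[OF N0] K1[rule_format, of 0]
          by (intro mult_right_mono) (auto intro: order_trans[OF norm_ge_zero])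
        finally have "H (X i) c \<le> W" .
        then show "norm (p c * H (X i) c) \<le> p c * W"
          using Hnn[of "X i" c] x pnn[of c] by (simp add: abs_mult mult_left_mono)
      qed
    qed
    then show "((\<lambda>x. integral\<^sup>L lborel (\<lambda>c. p c * H x c)) \<circ> X) \<longlonglongrightarrow> integral\<^sup>L lborel (\<lambda>c. p c * (C0 * J0 c))"
      by (simp add: comp_def)
  qed
  have stepD: "0 < integral\<^sup>L lborel (\<lambda>c. p c * J0 c)"
  proof (rule ccontr)
    assume "\<not> 0 < integral\<^sup>L lborel (\<lambda>c. p c * J0 c)"
    moreover have "0 \<le> integral\<^sup>L lborel (\<lambda>c. p c * J0 c)"
      using pnn Jfun_nonneg[OF nu2] by (intro integral_nonneg_AE AE_I2) (simp add: J0_def)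
    ultimately have "integral\<^sup>L lborel (\<lambda>c. p c * J0 c) = 0" by simp
    then have "AE c in lborel. p c * J0 c = 0"
      using integral_nonneg_eq_0_iff_AE[OF pJ0_int] pnn Jfun_nonneg[OF nu2] by (simp add: J0_def)
    then have "AE c in lborel. p c = 0"
    proof (rule eventually_mono[OF eventually_conj[OF AE_lborel_singleton[of 0]]], safe)
      fix c :: real assume "c \<noteq> 0" "p c * J0 c = 0"
      moreover have "0 < J0 c" unfolding J0_def using Jfun_pos[OF nu2 r1 l0 \<open>c \<noteq> 0\<close>] .
      ultimately show "p c = 0" by simp
    qed
    then have "integral\<^sup>L lborel p = 0"
      by (rule integral_eq_zero_AE)
    then show False using p1 by simp
  qed
  have int_eq: "integral\<^sup>L lborel (\<lambda>c. p c * (C0 * J0 c)) = C0 * integral\<^sup>L lborel (\<lambda>c. p c * J0 c)"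
    by (simp add: mult.left_commute[of _ C0])
  have num: "((\<lambda>x. p b * H x b) \<longlongrightarrow> p b * (C0 * J0 b)) (at_right 0)"
    by (intro tendsto_mult_left stepA[OF b])
  have "((\<lambda>x. p b * H x b / integral\<^sup>L lborel (\<lambda>c. p c * H x c)) \<longlongrightarrow>
          p b * (C0 * J0 b) / integral\<^sup>L lborel (\<lambda>c. p c * (C0 * J0 c))) (at_right 0)"
    using C0 stepD by (intro tendsto_divide num stepC) (simp add: int_eq)
  moreover have "p b * (C0 * J0 b) / integral\<^sup>L lborel (\<lambda>c. p c * (C0 * J0 c))
      = p b * J0 b / integral\<^sup>L lborel (\<lambda>c. p c * J0 c)"
    using C0 by (simp add: int_eq)
  moreover have "posterior p n x kappa0 rho0 S b = p b * H x b / integral\<^sup>L lborel (\<lambda>c. p c * H x c)" for x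
    unfolding posterior_def post_eq by simp
  ultimately show ?thesis by (simp add: J0_def nu_def)
qed

theorem mainTheorem3:
  fixes n :: nat and S :: "real^2^2" and kappa0 rho0 :: real and p :: "real \<Rightarrow> real"
  assumes "n \<ge> 3"
    and "pos_def2 S"
    and "-1 < rho0" and "rho0 < 1" and "kappa0 > 0"
    and "proper_density p"
  defines "nu \<equiv> real n - 1"
  defines "r \<equiv> r_of S"
  defines "l \<equiv> l_of S"
  shows "(\<forall>b. b \<noteq> 0 \<longrightarrow>
           ((\<lambda>nu0. posterior p n nu0 kappa0 rho0 S b) \<longlongrightarrow>
              p b * Jfun b nu r l / (LINT b'|lborel. p b' * Jfun b' nu r l)) (at_right 0))
     \<and> (\<forall>b. b \<noteq> 0 \<longrightarrow> Jfun b nu r l = Jfun (b / l) nu r 1)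
     \<and> (\<forall>q. proper_density q \<longrightarrow> (\<forall>bt. bt \<noteq> 0 \<longrightarrow>
           ((\<lambda>nu0. l * posterior (\<lambda>b. q (b / l) / l) n nu0 kappa0 rho0 S (l * bt)) \<longlongrightarrow>
              q bt * Jfun bt nu r 1 / (LINT t|lborel. q t * Jfun t nu r 1)) (at_right 0)))"
proof (intro conjI allI impI)
  note SF = pos_def2_facts[OF assms(2)]
  have l0: "l > 0" unfolding l_def l_of_def using SF by simp
  show "((\<lambda>nu0. posterior p n nu0 kappa0 rho0 S b) \<longlongrightarrow>
              p b * Jfun b nu r l / (LINT b'|lborel. p b' * Jfun b' nu r l)) (at_right 0)"
    if "b \<noteq> 0" for b
    unfolding nu_def r_def l_def by (rule part1[OF assms(1-6) that])
  show "Jfun b nu r l = Jfun (b / l) nu r 1" for b by (rule Jfun_scale[OF l0])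
  fix q :: "real \<Rightarrow> real" and bt :: real
  assume q: "proper_density q" and bt: "bt \<noteq> 0"
  have qm[measurable]: "q \<in> borel_measurable lborel" and qnn: "\<And>x. 0 \<le> q x"
    and qint: "integrable lborel q" and q1: "integral\<^sup>L lborel q = 1"
    using q by (auto simp: proper_density_def)
  define p' where "p' b = q (b / l) / l" for b
  have aff: "integral\<^sup>L lborel f = l * integral\<^sup>L lborel (\<lambda>x. f (l * x))" for f :: "real \<Rightarrow> real"
    using lborel_integral_real_affine[of l f 0] l0 by simp
  have p'prop: "proper_density p'"
    unfolding proper_density_def
  proof (intro conjI allI)
    show "p' \<in> borel_measurable lborel" unfolding p'_def[abs_def] by measurable
    show "0 \<le> p' x" for x unfolding p'_def using qnn l0 by simp
    have "integrable lborel (\<lambda>x. q (0 + (1 / l) * x))"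
      by (rule lborel_integrable_real_affine[OF qint]) (use l0 in simp)
    then show "integrable lborel p'" unfolding p'_def[abs_def] by simp
    have "integral\<^sup>L lborel p' = l * integral\<^sup>L lborel (\<lambda>x. p' (l * x))" by (rule aff)
    also have "\<dots> = integral\<^sup>L lborel q" unfolding p'_def using l0 by simp
    finally show "integral\<^sup>L lborel p' = 1" using q1 by simp
  qed
  have lb: "l * bt \<noteq> 0" using l0 bt by simp
  have lim: "((\<lambda>nu0. posterior p' n nu0 kappa0 rho0 S (l * bt)) \<longlongrightarrow>
              p' (l * bt) * Jfun (l * bt) nu r l / (LINT b'|lborel. p' b' * Jfun b' nu r l)) (at_right 0)"
    unfolding nu_def r_def l_def by (rule part1[OF assms(1-5) p'prop[unfolded l_def] lb[unfolded l_def]])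
  have I: "(LINT b'|lborel. p' b' * Jfun b' nu r l) = (LINT t|lborel. q t * Jfun t nu r 1)"
  proof -
    have "(LINT b'|lborel. p' b' * Jfun b' nu r l) = l * (LINT x|lborel. p' (l * x) * Jfun (l * x) nu r l)"
      by (rule aff)
    also have "\<dots> = (LINT t|lborel. q t * Jfun t nu r 1)"
      using l0 by (simp add: p'_def Jfun_scale[OF l0, of "l * _"])
    finally show ?thesis .
  qed
  have val: "l * (p' (l * bt) * Jfun (l * bt) nu r l / (LINT b'|lborel. p' b' * Jfun b' nu r l))
        = q bt * Jfun bt nu r 1 / (LINT t|lborel. q t * Jfun t nu r 1)"
    unfolding I using l0 by (simp add: p'_def Jfun_scale[OF l0, of "l * bt"])
  have "((\<lambda>nu0. l * posterior p' n nu0 kappa0 rho0 S (l * bt)) \<longlongrightarrow>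
         l * (p' (l * bt) * Jfun (l * bt) nu r l / (LINT b'|lborel. p' b' * Jfun b' nu r l))) (at_right 0)"
    by (rule tendsto_mult_left[OF lim])
  then show "((\<lambda>nu0. l * posterior (\<lambda>b. q (b / l) / l) n nu0 kappa0 rho0 S (l * bt)) \<longlongrightarrow>
              q bt * Jfun bt nu r 1 / (LINT t|lborel. q t * Jfun t nu r 1)) (at_right 0)"
    unfolding val by (simp add: p'_def[abs_def])
qed

end
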